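(* Let $g\ge1$ be an integer and let $\mathcal S\subseteq\mathbb N$ be a $\mathcal D[g]$ set. Then, as $n\to\infty$, $$|\mathcal S(n)|\ \le\ \log_2 n+\frac12\log_2\log_2 n+\log_2 g-\log_2\left(\sqrt{\frac2\pi}\right)+o(1),$$ where $\mathcal S(n):=\mathcal S\cap[1,n]$.
   Context: For a positive integer $g$, a set $\mathcal S=\{a_1<a_2<\cdots\}\subset\mathbb N$ is a $\mathcal D[g]$ set if for every $m$ (for which $a_m$ exists) and every $t\in\mathbb Z$, $$\left|\left\{I\subseteq\{1,\dots,m\}:\ \sum_{i\in I}a_i=t\right\}\right|\le g.$$ *)

theory Defs
  imports Complex_Main
begin

text \<open>A set S of naturals is a D[g] set if for every initial segment
  {a_1,...,a_m} of S (in increasing order) and every target t, at most g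
  subsets of that segment sum to t.  Initial segments of S are exactly the
  sets S \<inter> {..N}; index subsets correspond bijectively to element subsets
  since the a_i are distinct.\<close>
definition D_set :: "nat \<Rightarrow> nat set \<Rightarrow> bool" where
  "D_set g S \<longleftrightarrow>
     (\<forall>N t. card {I. I \<subseteq> S \<inter> {..N} \<and> \<Sum>I = t} \<le> g)"

end

theory Submission
  imports Defs "HOL-Analysis.Analysis" "HOL-Analysis.Harmonic_Numbers"
begin

lemma cos_ge_quad: "cos (x::real) \<ge> 1 - x^2/2"
proof -
  have "cos x = 1 - 2 * sin (x/2)^2" using cos_double_sin[of "x/2"] by simp
  moreover have "sin (x/2)^2 \<le> (x/2)^2"
    using abs_sin_x_le_abs_x[of "x/2"] by (metis abs_ge_zero power2_abs power_mono)
  ultimately show ?thesis by (simp add: power_divide)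
qed

lemma sin_ge_cubic: assumes "(x::real) \<ge> 0" shows "sin x \<ge> x - x^3/6"
proof -
  let ?f = "\<lambda>t::real. sin t - t + t^3/6"
  have "?f 0 \<le> ?f x"
  proof (rule DERIV_nonneg_imp_increasing_open[OF assms])
    fix t :: real
    have "DERIV ?f t :> cos t - 1 + 3 * t^2 / 6"
      by (auto intro!: derivative_eq_intros)
    moreover have "cos t - 1 + 3 * t^2 / 6 \<ge> 0" using cos_ge_quad[of t] by simp
    ultimately show "\<exists>y. DERIV ?f t :> y \<and> y \<ge> 0" by blast
  next
    show "continuous_on {0..x} ?f" by (intro continuous_intros) auto
  qed
  then show ?thesis by simp
qed

lemma sq_le_4sin_sq: assumes "\<bar>u::real\<bar> \<le> pi/2" shows "u^2 \<le> 4 * sin u ^ 2"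
proof -
  have main: "v \<le> 2 * sin v" if "0 \<le> v" "v \<le> pi/2" for v :: real
  proof -
    have "v^2 \<le> (pi/2)^2" using that by (intro power_mono) auto
    also have "\<dots> \<le> 3"
    proof -
      have p: "pi \<le> 3.2" "0 \<le> pi" using pi_approx pi_ge_zero by auto
      have "pi * pi \<le> 3.2 * 3.2" by (rule mult_mono) (use p in auto)
      then show ?thesis by (simp add: power2_eq_square)
    qed
    finally have "v^2 \<le> 3" .
    have "sin v \<ge> v - v^3/6" using sin_ge_cubic that by simp
    moreover have "v - v^3/6 \<ge> v/2"
    proof -
      have "v * v^2 \<le> v * 3" using \<open>v^2 \<le> 3\<close> that by (intro mult_left_mono) auto
      then show ?thesis by (simp add: power3_eq_cube power2_eq_square algebra_simps)
    qed
    ultimately show ?thesis by simp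
  qed
  have "\<bar>u\<bar> \<le> 2 * sin \<bar>u\<bar>" using main[of "\<bar>u\<bar>"] assms by simp
  also have "sin \<bar>u\<bar> = \<bar>sin u\<bar>"
  proof (cases "u \<ge> 0")
    case True
    then have "sin u \<ge> 0" using assms by (intro sin_ge_zero) auto
    then show ?thesis using True by simp
  next
    case False
    then have "sin (-u) \<ge> 0" using assms by (intro sin_ge_zero) auto
    then show ?thesis using False by (simp add: sin_minus)
  qed
  finally have "\<bar>u\<bar> \<le> 2 * \<bar>sin u\<bar>" .
  then have "\<bar>u\<bar>^2 \<le> (2 * \<bar>sin u\<bar>)^2" by (intro power_mono) auto
  then show ?thesis by (simp add: power_mult_distrib)
qed

lemma ftc_real:
  fixes f f' :: "real \<Rightarrow> real"
  assumes "a \<le> b" "\<And>x. (f has_real_derivative f' x) (at x)"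
  shows "(f' has_integral (f b - f a)) {a..b}"
  using assms(1)
proof (rule fundamental_theorem_of_calculus)
  fix x assume "x \<in> {a..b}"
  show "(f has_vector_derivative f' x) (at x within {a..b})"
    using assms(2)[of x] has_real_derivative_iff_has_vector_derivative
    by (metis has_field_derivative_at_within)
qed

definition W :: "nat \<Rightarrow> real \<Rightarrow> real" where
  "W k M = integral {-(pi/(2*M))..pi/(2*M)} (\<lambda>t. cos (M*t)^k)"

lemma cos_pow_int: "(\<lambda>t. cos (M*t)^k) integrable_on {a..b}" for M a b :: real
  by (rule integrable_continuous_interval) (intro continuous_intros)

lemma cos_range:
  assumes "M > 0" "t \<in> {-(pi/(2*M))..pi/(2*M)}"
  shows "-(pi/2) \<le> M*t" "M*t \<le> pi/2"
proof -
  have "M * t \<le> M * (pi/(2*M))" using assms by (intro mult_left_mono) auto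
  then show "M*t \<le> pi/2" using assms by simp
  have "M * (-(pi/(2*M))) \<le> M * t" using assms by (intro mult_left_mono) auto
  then show "-(pi/2) \<le> M*t" using assms by simp
qed

lemma W_rec:
  assumes "M > 0"
  shows "(real k + 2) * W (k+2) M = (real k + 1) * W k M"
proof -
  let ?c = "pi/(2*M)"
  let ?F = "\<lambda>t. sin (M*t) * cos (M*t)^(k+1)"
  let ?f = "\<lambda>t. M * ((real k + 2) * cos (M*t)^(k+2) - (real k + 1) * cos (M*t)^k)"
  have d: "(?F has_real_derivative ?f t) (at t)" for t
  proof -
    have c: "((\<lambda>t. cos (M*t)^(k+1)) has_real_derivative (real (k+1) * cos (M*t)^k * (- sin (M*t) * M))) (at t)"
    proof -
      have "((\<lambda>t. cos (M*t)) has_real_derivative (- sin (M*t) * M)) (at t)"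
        by (auto intro!: derivative_eq_intros)
      from DERIV_power_Suc[OF this, of k] show ?thesis by (simp add: algebra_simps)
    qed
    have "(?F has_real_derivative (M * cos (M*t)) * cos (M*t)^(k+1) + sin (M*t) * (real (k+1) * cos (M*t)^k * (- sin (M*t) * M))) (at t)"
    proof -
      have sd: "((\<lambda>t. sin (M*t)) has_real_derivative (cos (M*t) * M)) (at t)"
        by (auto intro!: derivative_eq_intros)
      from DERIV_mult[OF sd c] show ?thesis by (simp add: algebra_simps)
    qed
    moreover have "(M * cos (M*t)) * cos (M*t)^(k+1) + sin (M*t) * (real (k+1) * cos (M*t)^k * (- sin (M*t) * M)) = ?f t"
    proof -
      have s: "sin (M*t)^2 = 1 - cos (M*t)^2" by (simp add: sin_squared_eq)
      have "(M * cos (M*t)) * cos (M*t)^(k+1) + sin (M*t) * (real (k+1) * cos (M*t)^k * (- sin (M*t) * M))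
          = M * (cos (M*t)^(k+2) - real (k+1) * cos (M*t)^k * sin (M*t)^2)"
        by (simp add: power2_eq_square algebra_simps)
      also have "\<dots> = M * (cos (M*t)^(k+2) - real (k+1) * cos (M*t)^k * (1 - cos (M*t)^2))" unfolding s ..
      also have "\<dots> = ?f t" by (simp add: power_add power2_eq_square algebra_simps)
      finally show ?thesis .
    qed
    ultimately show ?thesis by simp
  qed
  have hi: "(?f has_integral (?F ?c - ?F (-?c))) {-?c..?c}"
    by (rule ftc_real) (use assms d in auto)
  have z: "?F ?c - ?F (-?c) = 0" using assms by auto
  have "integral {-?c..?c} ?f = 0" using integral_unique[OF hi] z by simp
  moreover have "integral {-?c..?c} ?f = M * ((real k + 2) * W (k+2) M - (real k + 1) * W k M)"
  proof -
    have i1: "(\<lambda>t. (real k + 2) * cos (M*t)^(k+2)) integrable_on {-?c..?c}"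
      by (rule integrable_continuous_interval) (intro continuous_intros)
    have i2: "(\<lambda>t. (real k + 1) * cos (M*t)^k) integrable_on {-?c..?c}"
      by (rule integrable_continuous_interval) (intro continuous_intros)
    show ?thesis by (simp only: W_def integral_mult_right integral_diff[OF i1 i2])
  qed
  ultimately show ?thesis using assms by simp
qed

lemma W0: "M > 0 \<Longrightarrow> W 0 M = pi / M"
  by (simp add: W_def)

lemma W1: assumes "M > 0" shows "W (Suc 0) M = 2 / M"
proof -
  let ?c = "pi/(2*M)"
  have "((\<lambda>t. cos (M*t)) has_integral (sin (M*?c)/M - sin (M*(-?c))/M)) {-?c..?c}"
  proof (rule ftc_real)
    show "-?c \<le> ?c" using assms by simp
    fix x show "((\<lambda>t. sin (M*t)/M) has_real_derivative cos (M*x)) (at x)"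
      using assms by (auto intro!: derivative_eq_intros)
  qed
  then show ?thesis using assms unfolding W_def by (simp add: integral_unique)
qed

lemma W_nonneg: assumes "M > 0" shows "W k M \<ge> 0"
  unfolding W_def
  by (rule integral_nonneg) (use cos_range[OF assms] cos_ge_zero in \<open>auto intro!: cos_pow_int\<close>)

lemma W_mono: assumes "M > 0" shows "W (Suc k) M \<le> W k M"
  unfolding W_def
proof (rule integral_le[OF cos_pow_int cos_pow_int])
  fix t assume t: "t \<in> {-(pi/(2*M))..pi/(2*M)}"
  have "0 \<le> cos (M*t)" using cos_range[OF assms t] cos_ge_zero by auto
  then show "cos (M*t)^Suc k \<le> cos (M*t)^k"
    by (simp add: mult_left_le_one_le)
qed

lemma W_prod: assumes "M > 0" shows "(real k + 1) * W k M * W (Suc k) M = 2 * pi / M^2"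
proof (induction k)
  case 0 then show ?case using assms by (simp add: W0 W1 power2_eq_square)
next
  case (Suc k)
  have "(real (Suc k) + 1) * W (Suc k) M * W (Suc (Suc k)) M
      = W (Suc k) M * ((real k + 2) * W (k+2) M)" by (simp add: algebra_simps)
  also have "\<dots> = W (Suc k) M * ((real k + 1) * W k M)" using W_rec[OF assms, of k] by simp
  also have "\<dots> = 2 * pi / M^2" using Suc by (simp add: algebra_simps)
  finally show ?case .
qed

lemma W_lower: assumes "M > 0" shows "W k M \<ge> sqrt (2*pi/(real k + 1)) / M"
proof -
  have "2 * pi / M^2 / (real k + 1) = W k M * W (Suc k) M"
    using W_prod[OF assms, of k] by (metis (no_types, lifting) mult.assoc nonzero_mult_div_cancel_left of_nat_Suc of_nat_neq_0 add.commute)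
  also have "\<dots> \<le> W k M * W k M"
    using W_mono[OF assms] W_nonneg[OF assms] by (intro mult_left_mono) auto
  finally have "2 * pi / M^2 / (real k + 1) \<le> (W k M)^2" by (simp add: power2_eq_square)
  then have "sqrt (2 * pi / M^2 / (real k + 1)) \<le> W k M"
    using W_nonneg[OF assms] real_le_lsqrt by (metis real_sqrt_le_iff real_sqrt_unique)
  moreover have "sqrt (2 * pi / M^2 / (real k + 1)) = sqrt (2*pi/(real k + 1)) / M"
  proof -
    have "2 * pi / M^2 / (real k + 1) = (2*pi/(real k + 1)) / M^2" by simp
    then show ?thesis using assms by (simp add: real_sqrt_divide real_sqrt_mult)
  qed
  ultimately show ?thesis by simp
qed

lemma W_sq_bound:
  assumes "M > 0"
  shows "integral {-(pi/(2*M))..pi/(2*M)} (\<lambda>t. t^2 * cos (M*t)^k) \<le> 4 / M^2 * (W k M / (real k + 2))"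
proof -
  let ?c = "pi/(2*M)"
  have "integral {-?c..?c} (\<lambda>t. t^2 * cos (M*t)^k) \<le> integral {-?c..?c} (\<lambda>t. 4 / M^2 * (cos (M*t)^k - cos (M*t)^(k+2)))"
  proof (rule integral_le)
    show "(\<lambda>t. t^2 * cos (M*t)^k) integrable_on {-?c..?c}"
      by (intro integrable_continuous_interval continuous_intros)
    show "(\<lambda>t. 4 / M^2 * (cos (M*t)^k - cos (M*t)^(k+2))) integrable_on {-?c..?c}"
      by (intro integrable_continuous_interval continuous_intros)
    fix t assume t: "t \<in> {-?c..?c}"
    have r: "\<bar>M*t\<bar> \<le> pi/2" using cos_range[OF assms t] by auto
    have "(M*t)^2 \<le> 4 * sin (M*t)^2" by (rule sq_le_4sin_sq[OF r])
    then have "t^2 \<le> 4 / M^2 * sin (M*t)^2" using assms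
      by (simp add: field_simps power_mult_distrib)
    moreover have "0 \<le> cos (M*t)^k" using cos_range[OF assms t] cos_ge_zero by auto
    ultimately have "t^2 * cos (M*t)^k \<le> 4 / M^2 * sin (M*t)^2 * cos (M*t)^k"
      by (intro mult_right_mono) auto
    also have "\<dots> = 4 / M^2 * ((1 - cos (M*t)^2) * cos (M*t)^k)"
      by (simp add: sin_squared_eq)
    also have "\<dots> = 4 / M^2 * (cos (M*t)^k - cos (M*t)^(k+2))"
      by (simp add: power_add power2_eq_square algebra_simps)
    finally show "t^2 * cos (M*t)^k \<le> 4 / M^2 * (cos (M*t)^k - cos (M*t)^(k+2))" .
  qed
  also have "\<dots> = 4 / M^2 * (W k M - W (k+2) M)"
    unfolding W_def by (simp only: integral_mult_right integral_diff[OF cos_pow_int cos_pow_int])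
  also have "W k M - W (k+2) M = W k M / (real k + 2)"
    using W_rec[OF assms, of k] by (simp add: field_simps)
  finally show ?thesis .
qed

definition XX :: "nat set \<Rightarrow> nat set \<Rightarrow> int" where
  "XX A I = 2 * int (\<Sum>I) - int (\<Sum>A)"

lemma XX_insert1:
  assumes "finite A" "x \<notin> A" "I \<subseteq> A"
  shows "XX (insert x A) I = XX A I - int x"
  using assms by (simp add: XX_def)

lemma XX_insert2:
  assumes "finite A" "x \<notin> A" "I \<subseteq> A"
  shows "XX (insert x A) (insert x I) = XX A I + int x"
proof -
  have "finite I" using assms finite_subset by blast
  moreover have "x \<notin> I" using assms by auto
  ultimately show ?thesis using assms by (simp add: XX_def)
qed

lemma sum_Pow_insert:
  assumes "finite A" "x \<notin> A"
  shows "(\<Sum>I\<in>Pow (insert x A). f I) = (\<Sum>I\<in>Pow A. f I + f (insert x I))"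
proof -
  have "(\<Sum>I\<in>Pow (insert x A). f I) = (\<Sum>I\<in>Pow A. f I) + (\<Sum>I\<in>insert x ` Pow A. f I)"
    unfolding Pow_insert by (rule sum.union_disjoint) (use assms in auto)
  also have "(\<Sum>I\<in>insert x ` Pow A. f I) = (\<Sum>I\<in>Pow A. f (insert x I))"
  proof (rule sum.reindex_cong[of "insert x"])
    show "inj_on (insert x) (Pow A)" using assms unfolding inj_on_def by (metis Pow_iff insert_ident subset_iff)
  qed auto
  finally show ?thesis by (simp add: sum.distrib)
qed

lemma cos_sin_sum:
  fixes \<theta> :: real
  assumes "finite A"
  shows "(\<Sum>I\<in>Pow A. cos (of_int (XX A I) * \<theta>)) = 2 ^ card A * (\<Prod>a\<in>A. cos (real a * \<theta>))
       \<and> (\<Sum>I\<in>Pow A. sin (of_int (XX A I) * \<theta>)) = 0"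
  using assms
proof (induction A rule: finite_induct)
  case empty then show ?case by (simp add: XX_def)
next
  case (insert x A)
  let ?y = "\<lambda>I. of_int (XX A I) * \<theta>"
  have c: "(\<Sum>I\<in>Pow (insert x A). cos (of_int (XX (insert x A) I) * \<theta>))
      = (\<Sum>I\<in>Pow A. cos (?y I - real x * \<theta>) + cos (?y I + real x * \<theta>))"
    unfolding sum_Pow_insert[OF insert.hyps]
    by (intro sum.cong) (use insert.hyps in \<open>auto simp: XX_insert1 XX_insert2 algebra_simps\<close>)
  also have "\<dots> = (\<Sum>I\<in>Pow A. 2 * cos (real x * \<theta>) * cos (?y I))"
    by (intro sum.cong) (auto simp: cos_add cos_diff)
  also have "\<dots> = 2 * cos (real x * \<theta>) * (\<Sum>I\<in>Pow A. cos (?y I))"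
    by (simp add: sum_distrib_left)
  finally have c': "(\<Sum>I\<in>Pow (insert x A). cos (of_int (XX (insert x A) I) * \<theta>)) = 2 * cos (real x * \<theta>) * (\<Sum>I\<in>Pow A. cos (?y I))" .
  have s: "(\<Sum>I\<in>Pow (insert x A). sin (of_int (XX (insert x A) I) * \<theta>))
      = (\<Sum>I\<in>Pow A. sin (?y I - real x * \<theta>) + sin (?y I + real x * \<theta>))"
    unfolding sum_Pow_insert[OF insert.hyps]
    by (intro sum.cong) (use insert.hyps in \<open>auto simp: XX_insert1 XX_insert2 algebra_simps\<close>)
  also have "\<dots> = (\<Sum>I\<in>Pow A. 2 * cos (real x * \<theta>) * sin (?y I))"
    by (intro sum.cong) (auto simp: sin_add sin_diff)
  also have "\<dots> = 2 * cos (real x * \<theta>) * (\<Sum>I\<in>Pow A. sin (?y I))"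
    by (simp add: sum_distrib_left)
  finally have s': "(\<Sum>I\<in>Pow (insert x A). sin (of_int (XX (insert x A) I) * \<theta>)) = 2 * cos (real x * \<theta>) * (\<Sum>I\<in>Pow A. sin (?y I))" .
  show ?case using insert c' s' by (simp add: algebra_simps)
qed

definition GG :: "nat \<Rightarrow> real \<Rightarrow> real" where
  "GG L \<theta> = (\<Sum>j<L. \<Sum>j'<L. cos ((real j - real j') * \<theta>))"

lemma GG_sq: "GG L \<theta> = (\<Sum>j<L. cos (real j * \<theta>))^2 + (\<Sum>j<L. sin (real j * \<theta>))^2"
  unfolding GG_def power2_eq_square sum_product
  by (simp add: left_diff_distrib cos_diff sum.distrib[symmetric])

lemma GG_nonneg: "GG L \<theta> \<ge> 0"
  unfolding GG_sq by simp

lemma GG_lower: "GG L \<theta> \<ge> real L ^ 2 - real L ^ 4 * \<theta>^2 / 2"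
proof -
  have "(\<Sum>j<L. \<Sum>j'<L. 1 - real L^2 * \<theta>^2 / 2) \<le> GG L \<theta>"
    unfolding GG_def
  proof (intro sum_mono)
    fix j j' assume "j \<in> {..<L}" "j' \<in> {..<L}"
    then have "\<bar>real j - real j'\<bar> \<le> real L" by auto
    then have "(real j - real j')^2 \<le> real L ^2"
      by (metis abs_ge_zero power2_abs power_mono)
    then have "((real j - real j') * \<theta>)^2 \<le> real L^2 * \<theta>^2"
      by (simp add: power_mult_distrib mult_right_mono)
    then show "1 - real L^2 * \<theta>^2 / 2 \<le> cos ((real j - real j') * \<theta>)"
      using cos_ge_quad[of "(real j - real j') * \<theta>"] by simp
  qed
  then show ?thesis by (simp add: power2_eq_square algebra_simps power4_eq_xxxx)
qed

lemma cos_sum_closed: "2 * sin (\<theta>/2) * (\<Sum>j<L. cos (real j * \<theta>)) = sin (real L * \<theta> - \<theta>/2) + sin (\<theta>/2)"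
proof (induction L)
  case 0 then show ?case by (simp add: sin_minus)
next
  case (Suc L)
  have e: "2 * sin (\<theta>/2) * cos (real L * \<theta>) = sin (real L * \<theta> + \<theta>/2) - sin (real L * \<theta> - \<theta>/2)"
    by (simp add: sin_add sin_diff)
  show ?case using Suc e by (simp add: algebra_simps)
qed

lemma sin_sum_closed: "2 * sin (\<theta>/2) * (\<Sum>j<L. sin (real j * \<theta>)) = cos (\<theta>/2) - cos (real L * \<theta> - \<theta>/2)"
proof (induction L)
  case 0 then show ?case by (simp add: cos_minus)
next
  case (Suc L)
  have e: "2 * sin (\<theta>/2) * sin (real L * \<theta>) = cos (real L * \<theta> - \<theta>/2) - cos (real L * \<theta> + \<theta>/2)"
    by (simp add: cos_add cos_diff)
  show ?case using Suc e by (simp add: algebra_simps)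
qed

lemma GG_upper: "GG L \<theta> * sin (\<theta>/2)^2 \<le> 1"
proof -
  let ?A = "real L * \<theta> - \<theta>/2" and ?B = "\<theta>/2"
  have "4 * (GG L \<theta> * sin (\<theta>/2)^2) = (2 * sin (\<theta>/2) * (\<Sum>j<L. cos (real j * \<theta>)))^2 + (2 * sin (\<theta>/2) * (\<Sum>j<L. sin (real j * \<theta>)))^2"
    unfolding GG_sq by (simp add: power_mult_distrib algebra_simps)
  also have "\<dots> = (sin ?A + sin ?B)^2 + (cos ?B - cos ?A)^2"
    unfolding cos_sum_closed sin_sum_closed ..
  also have "\<dots> = 2 + 2 * (sin ?A * sin ?B - cos ?A * cos ?B)"
    using sin_cos_squared_add[of ?A] sin_cos_squared_add[of ?B]
    by (simp add: power2_eq_square algebra_simps)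
  also have "sin ?A * sin ?B - cos ?A * cos ?B = - cos (?A + ?B)" using cos_add[of ?A ?B] by linarith
  also have "2 + 2 * (- cos (?A + ?B)) \<le> 4" using cos_ge_minus_one[of "?A + ?B"] by linarith
  finally show ?thesis by simp
qed

lemma cos_int_integral:
  fixes m :: int
  shows "integral {-pi..pi} (\<lambda>t. cos (of_int m * t)) = (if m = 0 then 2 * pi else 0)"
proof (cases "m = 0")
  case True then show ?thesis by simp
next
  case False
  have "((\<lambda>t. cos (of_int m * t)) has_integral (sin (of_int m * pi) / of_int m - sin (of_int m * (-pi)) / of_int m)) {-pi..pi}"
  proof (rule ftc_real)
    fix x show "((\<lambda>t. sin (of_int m * t) / of_int m) has_real_derivative cos (of_int m * x)) (at x)"
      using False by (auto intro!: derivative_eq_intros)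
  qed simp
  moreover have "sin (of_int m * pi) = 0" by (metis mult.commute sin_npi_int)
  ultimately show ?thesis using False by (simp add: integral_unique sin_minus)
qed

lemma ftc_real':
  fixes f f' :: "real \<Rightarrow> real"
  assumes "a \<le> b" "\<And>x. x \<in> {a..b} \<Longrightarrow> (f has_real_derivative f' x) (at x)"
  shows "(f' has_integral (f b - f a)) {a..b}"
  using assms(1)
proof (rule fundamental_theorem_of_calculus)
  fix x assume "x \<in> {a..b}"
  show "(f has_vector_derivative f' x) (at x within {a..b})"
    using assms(2)[OF \<open>x \<in> {a..b}\<close>] has_real_derivative_iff_has_vector_derivative
    by (metis has_field_derivative_at_within)
qed

lemma inv_sq_integral:
  fixes a b :: real
  assumes "0 < a" "a \<le> b"
  shows "integral {a..b} (\<lambda>t. 1 / t^2) \<le> 1 / a"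
proof -
  have "((\<lambda>t. 1 / t^2) has_integral ((\<lambda>t. - 1 / t) b - (\<lambda>t. - 1 / t) a)) {a..b}"
  proof (rule ftc_real'[OF assms(2)])
    fix x assume "x \<in> {a..b}"
    then have "x \<noteq> 0" using assms by auto
    then show "((\<lambda>t. - 1 / t) has_real_derivative 1 / x^2) (at x)"
      by (auto intro!: derivative_eq_intros simp: power2_eq_square)
  qed
  then have "integral {a..b} (\<lambda>t. 1 / t^2) = 1/a - 1/b" by (simp add: integral_unique)
  moreover have "1/b \<ge> 0" using assms by simp
  ultimately show ?thesis by simp
qed

lemma inv_sq_integral_neg:
  fixes a b :: real
  assumes "0 < a" "a \<le> b"
  shows "integral {-b..-a} (\<lambda>t. 1 / t^2) \<le> 1 / a"
proof -
  have "((\<lambda>t. 1 / t^2) has_integral ((\<lambda>t. - 1 / t) (-a) - (\<lambda>t. - 1 / t) (-b))) {-b..-a}"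
  proof (rule ftc_real')
    show "-b \<le> -a" using assms by simp
    fix x assume "x \<in> {-b..-a}"
    then have "x \<noteq> 0" using assms by auto
    then show "((\<lambda>t. - 1 / t) has_real_derivative 1 / x^2) (at x)"
      by (auto intro!: derivative_eq_intros simp: power2_eq_square)
  qed
  then have "integral {-b..-a} (\<lambda>t. 1 / t^2) = 1/a - 1/b" by (simp add: integral_unique)
  moreover have "1/b \<ge> 0" using assms by simp
  ultimately show ?thesis by simp
qed

definition PHI :: "nat set \<Rightarrow> real \<Rightarrow> real" where
  "PHI A \<theta> = (\<Prod>a\<in>A. cos (real a * \<theta>))"

lemma PHI_abs: "\<bar>PHI A \<theta>\<bar> \<le> 1"
proof -
  have "\<bar>PHI A \<theta>\<bar> = (\<Prod>a\<in>A. \<bar>cos (real a * \<theta>)\<bar>)" unfolding PHI_def by (simp add: abs_prod)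
  also have "\<dots> \<le> (\<Prod>a\<in>A. 1)" by (intro prod_mono) auto
  finally show ?thesis by simp
qed

lemma PHI_lower:
  assumes "M > 0" "\<And>a. a \<in> A \<Longrightarrow> real a \<le> M" "\<bar>\<theta>\<bar> \<le> pi/(2*M)"
  shows "PHI A \<theta> \<ge> cos (M*\<theta>) ^ card A"
proof -
  have Mt: "\<bar>M*\<theta>\<bar> \<le> pi/2"
  proof -
    have "\<bar>M*\<theta>\<bar> = M * \<bar>\<theta>\<bar>" using assms by (simp add: abs_mult)
    also have "\<dots> \<le> M * (pi/(2*M))" using assms by (intro mult_left_mono) auto
    finally show ?thesis using assms by simp
  qed
  have c0: "cos (M*\<theta>) \<ge> 0" using Mt by (intro cos_ge_zero) auto
  have "(\<Prod>a\<in>A. cos (M*\<theta>)) \<le> PHI A \<theta>"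
    unfolding PHI_def
  proof (rule prod_mono)
    fix a assume a: "a \<in> A"
    have "\<bar>real a * \<theta>\<bar> \<le> \<bar>M * \<theta>\<bar>"
      using assms(2)[OF a] by (simp add: abs_mult mult_right_mono)
    then have "cos \<bar>M*\<theta>\<bar> \<le> cos \<bar>real a * \<theta>\<bar>"
      using Mt by (intro cos_monotone_0_pi_le) auto
    then show "0 \<le> cos (M*\<theta>) \<and> cos (M*\<theta>) \<le> cos (real a * \<theta>)"
      using c0 by simp
  qed
  then show ?thesis by simp
qed

lemma card_R:
  fixes lo :: int
  shows "2 * card {s::nat. lo \<le> 2 * int s \<and> 2 * int s < lo + int L} \<le> L + 1"
proof -
  let ?R = "{s::nat. lo \<le> 2 * int s \<and> 2 * int s < lo + int L}"
  let ?B = "{(lo+1) div 2 .. (lo + int L - 1) div 2}"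
  have sub: "int ` ?R \<subseteq> ?B"
  proof
    fix x assume "x \<in> int ` ?R"
    then obtain s where s: "x = int s" "lo \<le> 2 * int s" "2 * int s < lo + int L" by auto
    have "(lo+1) div 2 \<le> int s" using s by presburger
    moreover have "int s \<le> (lo + int L - 1) div 2" using s by presburger
    ultimately show "x \<in> ?B" using s by auto
  qed
  have "card ?R = card (int ` ?R)" by (simp add: card_image)
  also have "\<dots> \<le> card ?B" by (rule card_mono[OF _ sub]) simp
  also have "card ?B = nat ((lo + int L - 1) div 2 - (lo+1) div 2 + 1)" by simp
  finally have "card ?R \<le> nat ((lo + int L - 1) div 2 - (lo+1) div 2 + 1)" .
  moreover have "2 * nat ((lo + int L - 1) div 2 - (lo+1) div 2 + 1) \<le> L + 1"
  proof -
    have "2 * ((lo + int L - 1) div 2 - (lo+1) div 2 + 1) \<le> int L + 1" by presburger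
    then show ?thesis by linarith
  qed
  ultimately show ?thesis by linarith
qed


definition RR :: "nat set \<Rightarrow> nat \<Rightarrow> real \<Rightarrow> real" where
  "RR A L \<theta> = (\<Sum>I\<in>Pow A. \<Sum>j<L. \<Sum>j'<L. cos (of_int (XX A I + int j - int j') * \<theta>))"

lemma RR_eq:
  assumes "finite A"
  shows "RR A L \<theta> = 2 ^ card A * PHI A \<theta> * GG L \<theta>"
proof -
  let ?X = "\<lambda>I. of_int (XX A I) * \<theta>" and ?d = "\<lambda>j j'. (real j - real j') * \<theta>"
  have "RR A L \<theta> = (\<Sum>I\<in>Pow A. \<Sum>j<L. \<Sum>j'<L. cos (?X I) * cos (?d j j') - sin (?X I) * sin (?d j j'))"
    unfolding RR_def by (intro sum.cong refl) (simp add: cos_add[symmetric] algebra_simps)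
  also have "\<dots> = (\<Sum>I\<in>Pow A. cos (?X I) * GG L \<theta>) - (\<Sum>I\<in>Pow A. sin (?X I) * (\<Sum>j<L. \<Sum>j'<L. sin (?d j j')))"
    unfolding GG_def by (simp add: sum_subtractf sum_distrib_left)
  also have "\<dots> = (\<Sum>I\<in>Pow A. cos (?X I)) * GG L \<theta> - (\<Sum>I\<in>Pow A. sin (?X I)) * (\<Sum>j<L. \<Sum>j'<L. sin (?d j j'))"
    by (simp add: sum_distrib_right)
  also have "\<dots> = 2 ^ card A * PHI A \<theta> * GG L \<theta>"
    using cos_sin_sum[OF assms, of \<theta>] unfolding PHI_def by simp
  finally show ?thesis .
qed

definition NN :: "nat set \<Rightarrow> nat \<Rightarrow> real" where
  "NN A L = (\<Sum>I\<in>Pow A. \<Sum>j<L. \<Sum>j'<L. if XX A I + int j - int j' = 0 then 1 else 0)"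

lemma RR_integral:
  assumes "finite A"
  shows "(RR A L has_integral (2 * pi * NN A L)) {-pi..pi}"
proof -
  have "((\<lambda>\<theta>. RR A L \<theta>) has_integral (\<Sum>I\<in>Pow A. \<Sum>j<L. \<Sum>j'<L. (if XX A I + int j - int j' = 0 then 2 * pi else 0))) {-pi..pi}"
    unfolding RR_def
  proof (intro has_integral_sum)
    fix I j j'
    have "(\<lambda>t. cos (of_int (XX A I + int j - int j') * t)) integrable_on {-pi..pi}"
      by (rule integrable_continuous_interval) (intro continuous_intros)
    from integrable_integral[OF this] show "((\<lambda>t. cos (of_int (XX A I + int j - int j') * t)) has_integral (if XX A I + int j - int j' = 0 then 2 * pi else 0)) {-pi..pi}"
      unfolding cos_int_integral .
  qed (use assms in auto)
  moreover have "(\<Sum>I\<in>Pow A. \<Sum>j<L. \<Sum>j'<L. (if XX A I + int j - int j' = 0 then 2 * pi else 0)) = 2 * pi * NN A L"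
    unfolding NN_def by (simp add: sum_distrib_left if_distrib cong: if_cong)
  ultimately show ?thesis by simp
qed


lemma sum_ind: "(\<Sum>j'<L. (if (v::int) - int j' = 0 then 1 else 0::real)) = (if 0 \<le> v \<and> v < int L then 1 else 0)"
proof (induction L)
  case 0 then show ?case by simp
next
  case (Suc L) then show ?case by auto
qed

lemma NN_upper:
  assumes "finite A" and g: "\<And>s. card {I \<in> Pow A. \<Sum>I = s} \<le> g"
  shows "NN A L \<le> real g * real L * (real L + 1) / 2"
proof -
  let ?lo = "\<lambda>j::nat. int (\<Sum>A) - int j"
  let ?Rj = "\<lambda>j. {s::nat. ?lo j \<le> 2 * int s \<and> 2 * int s < ?lo j + int L}"
  have step1: "(\<Sum>j'<L. (if XX A I + int j - int j' = 0 then 1 else 0::real)) \<le> (if \<Sum>I \<in> ?Rj j then 1 else 0)" for I j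
  proof -
    have "(\<Sum>j'<L. (if XX A I + int j - int j' = 0 then 1 else 0::real)) = (if 0 \<le> XX A I + int j \<and> XX A I + int j < int L then 1 else 0)"
      by (rule sum_ind)
    moreover have "0 \<le> XX A I + int j \<and> XX A I + int j < int L \<longleftrightarrow> \<Sum>I \<in> ?Rj j"
      unfolding XX_def by auto
    ultimately show ?thesis by simp
  qed
  have step2: "(\<Sum>I\<in>Pow A. (if \<Sum>I \<in> ?Rj j then 1 else 0::real)) \<le> real g * (real L + 1) / 2" for j
  proof -
    have fin: "finite (?Rj j)"
    proof (rule finite_subset[OF _ finite_atMost])
      show "?Rj j \<subseteq> {..nat (?lo j + int L)}"
      proof
        fix s assume "s \<in> ?Rj j"
        then have "2 * int s < ?lo j + int L" by simp
        then have "int s \<le> ?lo j + int L" by linarith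
        then show "s \<in> {..nat (?lo j + int L)}" by (simp add: le_nat_iff)
      qed
    qed
    have e1: "(\<Sum>I\<in>Pow A. (if \<Sum>I \<in> ?Rj j then 1 else 0::real)) = real (card {I \<in> Pow A. \<Sum>I \<in> ?Rj j})"
      using assms(1) by (simp add: sum.inter_filter[symmetric])
    have e2: "{I \<in> Pow A. \<Sum>I \<in> ?Rj j} = (\<Union>s\<in>?Rj j. {I \<in> Pow A. \<Sum>I = s})" by blast
    have "card {I \<in> Pow A. \<Sum>I \<in> ?Rj j} \<le> (\<Sum>s\<in>?Rj j. card {I \<in> Pow A. \<Sum>I = s})"
      unfolding e2 by (rule card_UN_le[OF fin])
    also have "\<dots> \<le> (\<Sum>s\<in>?Rj j. g)" by (rule sum_mono) (rule g)
    also have "\<dots> = g * card (?Rj j)" by simp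
    finally have "card {I \<in> Pow A. \<Sum>I \<in> ?Rj j} \<le> g * card (?Rj j)" .
    then have "real (card {I \<in> Pow A. \<Sum>I \<in> ?Rj j}) \<le> real (g * card (?Rj j))"
      by (simp only: of_nat_le_iff)
    then have "real (card {I \<in> Pow A. \<Sum>I \<in> ?Rj j}) \<le> real g * real (card (?Rj j))"
      by simp
    moreover have "real (2 * card (?Rj j)) \<le> real (L + 1)"
      using card_R[of "?lo j" L] by (simp only: of_nat_le_iff)
    then have "real (card (?Rj j)) \<le> (real L + 1) / 2" by simp
    then have "real g * real (card (?Rj j)) \<le> real g * ((real L + 1) / 2)"
      by (intro mult_left_mono) auto
    ultimately show ?thesis using e1 by simp
  qed
  have "NN A L = (\<Sum>j<L. \<Sum>I\<in>Pow A. \<Sum>j'<L. (if XX A I + int j - int j' = 0 then 1 else 0::real))"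
    unfolding NN_def by (rule sum.swap)
  also have "\<dots> \<le> (\<Sum>j<L. \<Sum>I\<in>Pow A. (if \<Sum>I \<in> ?Rj j then 1 else 0::real))"
    by (intro sum_mono step1)
  also have "\<dots> \<le> (\<Sum>j<L. real g * (real L + 1) / 2)"
    by (intro sum_mono step2)
  also have "\<dots> = real g * real L * (real L + 1) / 2" by simp
  finally show ?thesis .
qed

lemma RR_cont: "continuous_on S (RR A L)"
  unfolding RR_def by (intro continuous_intros)

lemma RR_int: "RR A L integrable_on {a..b}" for a b :: real
  by (rule integrable_continuous_interval[OF RR_cont])

lemma GG_tail:
  assumes "t \<noteq> 0" "\<bar>t\<bar> \<le> pi"
  shows "GG L t \<le> 16 / t^2"
proof -
  have "(t/2)^2 \<le> 4 * sin (t/2)^2" using assms by (intro sq_le_4sin_sq) auto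
  then have s: "t^2 / 16 \<le> sin (t/2)^2" by (simp add: power_divide)
  have tp: "t^2 > 0" using assms by simp
  then have sp: "sin (t/2)^2 > 0" using s by linarith
  have "GG L t * sin (t/2)^2 \<le> 1" by (rule GG_upper)
  then have "GG L t \<le> 1 / sin (t/2)^2" using sp by (simp add: field_simps)
  also have "\<dots> \<le> 1 / (t^2/16)"
    by (rule divide_left_mono) (use s tp sp in \<open>auto intro: mult_pos_pos\<close>)
  finally show ?thesis by simp
qed

lemma RR_tail_pt:
  assumes "finite A" "t \<noteq> 0" "\<bar>t\<bar> \<le> pi"
  shows "RR A L t \<ge> - (2 ^ card A * 16) * (1 / t^2)"
proof -
  have "- (2 ^ card A * GG L t) \<le> 2 ^ card A * PHI A t * GG L t"
  proof -
    have "\<bar>2 ^ card A * PHI A t * GG L t\<bar> \<le> 2 ^ card A * GG L t"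
    proof -
      have "\<bar>PHI A t\<bar> * GG L t \<le> GG L t"
        by (rule mult_left_le_one_le) (use PHI_abs[of A t] GG_nonneg[of L t] in auto)
      then show ?thesis using GG_nonneg[of L t] by (simp add: abs_mult)
    qed
    then show ?thesis by linarith
  qed
  moreover have "2 ^ card A * GG L t \<le> 2 ^ card A * (16 / t^2)"
    using GG_tail[OF assms(2,3)] by (intro mult_left_mono) auto
  ultimately show ?thesis using RR_eq[OF assms(1)] by simp
qed

lemma RR_mid_pt:
  assumes "finite A" "M > 0" "\<And>a. a \<in> A \<Longrightarrow> real a \<le> M" "\<bar>t\<bar> \<le> pi/(2*M)"
  shows "RR A L t \<ge> 2 ^ card A * (cos (M*t) ^ card A * (real L ^ 2 - real L ^ 4 * t^2 / 2))"
proof -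
  have Mt: "-(pi/2) \<le> M*t" "M*t \<le> pi/2"
  proof -
    have "t \<in> {-(pi/(2*M))..pi/(2*M)}" using assms(4) by auto
    from cos_range[OF assms(2) this] show "-(pi/2) \<le> M*t" "M*t \<le> pi/2" by auto
  qed
  have c0: "cos (M*t) ^ card A \<ge> 0" using cos_ge_zero[OF Mt] by simp
  have "cos (M*t) ^ card A * (real L ^ 2 - real L ^ 4 * t^2 / 2) \<le> cos (M*t) ^ card A * GG L t"
    using GG_lower[of L t] c0 by (intro mult_left_mono) auto
  also have "\<dots> \<le> PHI A t * GG L t"
    using PHI_lower[OF assms(2,3,4)] GG_nonneg[of L t] by (intro mult_right_mono) auto
  finally show ?thesis using RR_eq[OF assms(1)] by (simp add: mult.assoc)
qed

lemma main_ineq: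
  fixes A :: "nat set" and M :: real and L g :: nat
  assumes fin: "finite A" and M1: "M \<ge> 1" and aM: "\<And>a. a \<in> A \<Longrightarrow> real a \<le> M"
    and g: "\<And>s. card {I \<in> Pow A. \<Sum>I = s} \<le> g"
  shows "2 ^ card A * (real L ^ 2 * W (card A) M - 2 * real L ^ 4 * W (card A) M / (M^2 * (real (card A) + 2)) - 64 * M / pi)
           \<le> pi * real g * real L * (real L + 1)"
proof -
  define k where "k = card A"
  define c where "c = pi / (2*M)"
  have M0: "M > 0" using M1 by simp
  have c0: "c > 0" unfolding c_def using M0 by simp
  have cpi: "c \<le> pi" unfolding c_def using M1 pi_gt_zero by (simp add: field_simps)
  have tot: "integral {-pi..pi} (RR A L) = 2 * pi * NN A L"
    using RR_integral[OF fin] by (simp add: integral_unique)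
  have tot_le: "integral {-pi..pi} (RR A L) \<le> pi * real g * real L * (real L + 1)"
  proof -
    have "2 * pi * NN A L \<le> 2 * pi * (real g * real L * (real L + 1) / 2)"
      using NN_upper[OF fin g, of L] pi_gt_zero by (intro mult_left_mono) auto
    then show ?thesis using tot by simp
  qed
  have split1: "integral {-pi..-c} (RR A L) + integral {-c..pi} (RR A L) = integral {-pi..pi} (RR A L)"
    by (rule Henstock_Kurzweil_Integration.integral_combine) (use c0 cpi in \<open>auto intro: RR_int\<close>)
  have split2: "integral {-c..c} (RR A L) + integral {c..pi} (RR A L) = integral {-c..pi} (RR A L)"
    by (rule Henstock_Kurzweil_Integration.integral_combine) (use c0 cpi in \<open>auto intro: RR_int\<close>)
  have mid: "integral {-c..c} (RR A L) \<ge> 2 ^ k * (real L ^ 2 * W k M - 2 * real L ^ 4 * W k M / (M^2 * (real k + 2)))"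
  proof -
    let ?h = "\<lambda>t. 2 ^ k * (cos (M*t) ^ k * (real L ^ 2 - real L ^ 4 * t^2 / 2))"
    have "integral {-c..c} ?h \<le> integral {-c..c} (RR A L)"
    proof (rule integral_le)
      show "?h integrable_on {-c..c}" by (rule integrable_continuous_interval) (intro continuous_intros; simp)
      show "RR A L integrable_on {-c..c}" by (rule RR_int)
      fix t assume "t \<in> {-c..c}"
      then have "\<bar>t\<bar> \<le> pi/(2*M)" unfolding c_def by auto
      then show "?h t \<le> RR A L t" using RR_mid_pt[OF fin M0 aM] unfolding k_def by blast
    qed
    moreover have "integral {-c..c} ?h = 2 ^ k * (real L ^ 2 * W k M - real L ^ 4 / 2 * integral {-c..c} (\<lambda>t. t^2 * cos (M*t)^k))"
    proof -
      have i1: "(\<lambda>t. real L ^ 2 * cos (M*t)^k) integrable_on {-c..c}"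
        by (rule integrable_continuous_interval) (intro continuous_intros)
      have i2: "(\<lambda>t. real L ^ 4 / 2 * (t^2 * cos (M*t)^k)) integrable_on {-c..c}"
        by (rule integrable_continuous_interval) (intro continuous_intros)
      have "?h = (\<lambda>t. 2 ^ k * (real L ^ 2 * cos (M*t)^k - real L ^ 4 / 2 * (t^2 * cos (M*t)^k)))"
        by (rule ext) (simp add: algebra_simps)
      then have "integral {-c..c} ?h = 2 ^ k * (integral {-c..c} (\<lambda>t. real L ^ 2 * cos (M*t)^k) - integral {-c..c} (\<lambda>t. real L ^ 4 / 2 * (t^2 * cos (M*t)^k)))"
        by (simp only: integral_mult_right integral_diff[OF i1 i2])
      then show ?thesis unfolding W_def c_def by (simp only: integral_mult_right)
    qed
    moreover have "integral {-c..c} (\<lambda>t. t^2 * cos (M*t)^k) \<le> 4 / M^2 * (W k M / (real k + 2))"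
      using W_sq_bound[OF M0, of k] unfolding c_def by simp
    ultimately have A1: "integral {-c..c} (RR A L) \<ge> 2 ^ k * (real L ^ 2 * W k M - real L ^ 4 / 2 * integral {-c..c} (\<lambda>t. t^2 * cos (M*t)^k))"
      and A0: "integral {-c..c} (\<lambda>t. t^2 * cos (M*t)^k) \<le> 4 / M^2 * (W k M / (real k + 2))"
      by simp_all
    have A2: "real L ^ 4 / 2 * integral {-c..c} (\<lambda>t. t^2 * cos (M*t)^k) \<le> real L ^ 4 / 2 * (4 / M^2 * (W k M / (real k + 2)))"
      by (rule mult_left_mono[OF A0]) simp
    have A3: "2 ^ k * (real L ^ 2 * W k M - real L ^ 4 / 2 * (4 / M^2 * (W k M / (real k + 2)))) \<le> 2 ^ k * (real L ^ 2 * W k M - real L ^ 4 / 2 * integral {-c..c} (\<lambda>t. t^2 * cos (M*t)^k))"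
      using A2 by (intro mult_left_mono) auto
    have A4: "real L ^ 4 / 2 * (4 / M^2 * (W k M / (real k + 2))) = 2 * real L ^ 4 * W k M / (M^2 * (real k + 2))"
      by (simp add: field_simps)
    show ?thesis using A1 A3 unfolding A4 by linarith
  qed
  have right: "integral {c..pi} (RR A L) \<ge> - (2 ^ k * 16) * (1 / c)"
  proof -
    have "integral {c..pi} (\<lambda>t. - (2 ^ k * 16) * (1 / t^2)) \<le> integral {c..pi} (RR A L)"
    proof (rule integral_le)
      show "(\<lambda>t. - (2 ^ k * 16) * (1 / t^2)) integrable_on {c..pi}"
        by (rule integrable_continuous_interval) (use c0 in \<open>intro continuous_intros; auto\<close>)
      show "RR A L integrable_on {c..pi}" by (rule RR_int)
      fix t assume "t \<in> {c..pi}"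
      then show "- (2 ^ k * 16) * (1 / t^2) \<le> RR A L t"
        using RR_tail_pt[OF fin, of t L] c0 unfolding k_def by auto
    qed
    moreover have "integral {c..pi} (\<lambda>t. - (2 ^ k * 16) * (1 / t^2)) = - (2 ^ k * 16) * integral {c..pi} (\<lambda>t. 1 / t^2)"
      by (simp only: integral_mult_right)
    moreover have "integral {c..pi} (\<lambda>t. 1 / t^2) \<le> 1 / c" by (rule inv_sq_integral[OF c0 cpi])
    then have "(2 ^ k * 16) * integral {c..pi} (\<lambda>t. 1 / t^2) \<le> (2 ^ k * 16) * (1 / c)"
      by (intro mult_left_mono) auto
    ultimately show ?thesis by linarith
  qed
  have left: "integral {-pi..-c} (RR A L) \<ge> - (2 ^ k * 16) * (1 / c)"
  proof -
    have "integral {-pi..-c} (\<lambda>t. - (2 ^ k * 16) * (1 / t^2)) \<le> integral {-pi..-c} (RR A L)"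
    proof (rule integral_le)
      show "(\<lambda>t. - (2 ^ k * 16) * (1 / t^2)) integrable_on {-pi..-c}"
        by (rule integrable_continuous_interval) (use c0 in \<open>intro continuous_intros; auto\<close>)
      show "RR A L integrable_on {-pi..-c}" by (rule RR_int)
      fix t assume "t \<in> {-pi..-c}"
      then show "- (2 ^ k * 16) * (1 / t^2) \<le> RR A L t"
        using RR_tail_pt[OF fin, of t L] c0 unfolding k_def by auto
    qed
    moreover have "integral {-pi..-c} (\<lambda>t. - (2 ^ k * 16) * (1 / t^2)) = - (2 ^ k * 16) * integral {-pi..-c} (\<lambda>t. 1 / t^2)"
      by (simp only: integral_mult_right)
    moreover have "integral {-pi..-c} (\<lambda>t. 1 / t^2) \<le> 1 / c" by (rule inv_sq_integral_neg[OF c0 cpi])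
    then have "(2 ^ k * 16) * integral {-pi..-c} (\<lambda>t. 1 / t^2) \<le> (2 ^ k * 16) * (1 / c)"
      by (intro mult_left_mono) auto
    ultimately show ?thesis by linarith
  qed
  have ic: "(2 ^ k * 16) * (1 / c) = 2 ^ k * (32 * M / pi)" unfolding c_def by simp
  have "2 ^ k * (real L ^ 2 * W k M - 2 * real L ^ 4 * W k M / (M^2 * (real k + 2))) - 2 * (2 ^ k * (32 * M / pi))
       \<le> integral {-pi..pi} (RR A L)"
    using mid left right split1 split2 ic by linarith
  moreover have "2 ^ k * (real L ^ 2 * W k M - 2 * real L ^ 4 * W k M / (M^2 * (real k + 2)) - 64 * M / pi)
      = 2 ^ k * (real L ^ 2 * W k M - 2 * real L ^ 4 * W k M / (M^2 * (real k + 2))) - 2 * (2 ^ k * (32 * M / pi))"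
    by (simp add: right_diff_distrib)
  ultimately show ?thesis using tot_le unfolding k_def by linarith
qed

lemma sqrt2pi_ge: "sqrt (2*pi) \<ge> 2.5"
proof -
  have "2.5^2 \<le> 2*pi" using pi_approx by (simp add: power2_eq_square)
  then show ?thesis by (metis real_le_rsqrt)
qed

lemma arith_core:
  fixes k :: nat and M e s L W P g :: real
  assumes M1: "M \<ge> 1" and e0: "0 < e" and e1: "e \<le> 1/4"
    and s_def: "s = sqrt (real k + 1)" and sbig: "s \<ge> 80 / e^3"
    and L1: "e/3 * M * s \<le> L" and L2: "L \<le> e/3 * M * s + 1"
    and Wlow: "W \<ge> sqrt (2*pi) / (M * s)" and P0: "P > 0" and g0: "g \<ge> 0"
    and main: "P * (L^2 * W - 2 * L^4 * W / (M^2 * (real k + 2)) - 64 * M / pi) \<le> pi * g * L * (L + 1)"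
  shows "P \<le> g * M * s * sqrt (pi/2) * ((1 + e) / (1 - 2*e))"
proof -
  define d where "d = e/3"
  have d0: "d > 0" using e0 unfolding d_def by simp
  have s0: "s > 0" using s_def by simp
  have ss: "s^2 = real k + 1" using s_def by simp
  have e3: "e^3 \<le> e" using e0 e1 by (simp add: power3_eq_cube mult_le_one mult_le_cancel_right1)
  have e3p: "e^3 > 0" using e0 by simp
  have ds1: "d * s \<ge> 1"
  proof -
    have "80 / e^3 \<ge> 80 / e" using e3 e3p by (intro divide_left_mono) auto
    then have "s \<ge> 80 / e" using sbig by linarith
    then have "e * s \<ge> 80" using e0 by (simp add: field_simps)
    then show ?thesis unfolding d_def by simp
  qed
  have dMs: "d * M * s \<ge> 1"
  proof -
    have "d * s * M \<ge> 1 * 1" using ds1 M1 by (intro mult_mono) auto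
    then show ?thesis by (simp add: mult_ac)
  qed
  have L0: "L > 0" using L1 dMs unfolding d_def by linarith
  have Lup: "L \<le> 2 * (d * M * s)" using L2 dMs unfolding d_def by linarith
  have "sqrt (2*pi) / (M * s) > 0" using s0 M1 pi_gt_zero by simp
  then have W0: "W > 0" using Wlow by linarith
  define r where "r = 2 * L^2 / (M^2 * (real k + 2))"
  have r_le: "r \<le> e"
  proof -
    have "L^2 \<le> (2 * (d * M * s))^2" using Lup L0 by (intro power_mono) auto
    then have "2 * L^2 \<le> 8 * d^2 * M^2 * s^2" by (simp add: power_mult_distrib mult_ac)
    also have "\<dots> \<le> 8 * d^2 * M^2 * (real k + 2)" using ss by (intro mult_left_mono) auto
    finally have nn: "2 * L^2 \<le> 8 * d^2 * M^2 * (real k + 2)" .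
    have "r \<le> (8 * d^2 * M^2 * (real k + 2)) / (M^2 * (real k + 2))"
      unfolding r_def by (rule divide_right_mono[OF nn]) simp
    also have "\<dots> = 8 * d^2" using M1 by simp
    finally have "r \<le> 8 * d^2" .
    also have "8 * d^2 \<le> e" unfolding d_def using e0 e1 by (simp add: power2_eq_square field_simps)
    finally show ?thesis .
  qed
  have "L^2 * W - 2 * L^4 * W / (M^2 * (real k + 2)) = L^2 * (W * (1 - r))"
    unfolding r_def by (simp add: field_simps power4_eq_xxxx power2_eq_square)
  then have main2: "P * (L^2 * (W * (1 - r)) - 64 * M / pi) \<le> pi * g * L * (L + 1)" using main by simp
  have main3: "P * (W * (1 - r) - 64 * M / (pi * L^2)) \<le> pi * g * (1 + 1/L)"
  proof -
    have eq1: "P * (L^2 * (W * (1 - r)) - 64 * M / pi) = L^2 * (P * (W * (1 - r) - 64 * M / (pi * L^2)))"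
      using L0 by (simp add: field_simps)
    have eq2: "pi * g * L * (L + 1) = L^2 * (pi * g * (1 + 1/L))"
      using L0 by (simp add: field_simps power2_eq_square)
    have "L^2 * (P * (W * (1 - r) - 64 * M / (pi * L^2))) \<le> L^2 * (pi * g * (1 + 1/L))"
      using main2[unfolded eq1 eq2] .
    then show ?thesis using L0 by simp
  qed
  have t1: "W * (1 - r) \<ge> sqrt (2*pi) / (M * s) * (1 - e)"
  proof -
    have "W * (1 - r) \<ge> W * (1 - e)" using r_le W0 by (intro mult_left_mono) auto
    moreover have "W * (1 - e) \<ge> sqrt (2*pi) / (M * s) * (1 - e)" using Wlow e1 by (intro mult_right_mono) auto
    ultimately show ?thesis by linarith
  qed
  have t2: "64 * M / (pi * L^2) \<le> sqrt (2*pi) / (M * s) * e"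
  proof -
    have "L^2 \<ge> (d * M * s)^2" using L1 dMs unfolding d_def by (intro power_mono) auto
    then have "64 * M / (pi * L^2) \<le> 64 * M / (pi * (d * M * s)^2)"
      using dMs pi_gt_zero M1 by (intro divide_left_mono mult_left_mono mult_pos_pos) auto
    also have "\<dots> = (576 / (pi * e^2 * s)) / (M * s)"
      unfolding d_def using M1 s0 e0 by (simp add: field_simps power2_eq_square)
    also have "\<dots> \<le> (sqrt (2*pi) * e) / (M * s)"
    proof (rule divide_right_mono)
      have "e^3 * s \<ge> 80" using sbig e3p by (simp add: field_simps)
      have "pi * sqrt (2*pi) \<ge> 3 * 2.5" using pi_gt3 sqrt2pi_ge by (intro mult_mono) auto
      then have "pi * sqrt (2*pi) * (e^3 * s) \<ge> 7.5 * 80" using \<open>e^3 * s \<ge> 80\<close>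
        by (intro mult_mono) auto
      then have "576 \<le> sqrt (2*pi) * e * (pi * e^2 * s)" by (simp add: power3_eq_cube power2_eq_square mult_ac)
      then show "576 / (pi * e^2 * s) \<le> sqrt (2*pi) * e" using e0 s0 by (simp add: field_simps)
    qed (use M1 s0 in auto)
    finally show ?thesis by simp
  qed
  have t3: "1/L \<le> e"
  proof -
    have "d * s * 1 \<le> d * s * M" using M1 d0 s0 by (intro mult_left_mono) auto
    then have "L \<ge> d * s" using L1 unfolding d_def by (simp add: mult_ac)
    moreover have "d * s \<ge> 1/e"
    proof -
      have "80 / e^3 \<ge> 3 / e^2" using e0 e1 by (simp add: field_simps power3_eq_cube power2_eq_square)
      then have "s \<ge> 3 / e^2" using sbig by linarith
      then show ?thesis unfolding d_def using e0 by (simp add: field_simps power2_eq_square)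
    qed
    ultimately have "L \<ge> 1/e" by linarith
    then show ?thesis using e0 L0 by (simp add: field_simps)
  qed
  have "P * (sqrt (2*pi) / (M * s) * (1 - 2*e)) \<le> P * (W * (1 - r) - 64 * M / (pi * L^2))"
  proof -
    have "sqrt (2*pi) / (M * s) * (1 - 2*e) = sqrt (2*pi) / (M * s) * (1 - e) - sqrt (2*pi) / (M * s) * e"
      by (simp add: right_diff_distrib)
    then have "sqrt (2*pi) / (M * s) * (1 - 2*e) \<le> W * (1 - r) - 64 * M / (pi * L^2)"
      using t1 t2 by linarith
    then show ?thesis using P0 by (intro mult_left_mono) auto
  qed
  also have "\<dots> \<le> pi * g * (1 + 1/L)" by (rule main3)
  also have "\<dots> \<le> pi * g * (1 + e)" using t3 g0 by (intro mult_left_mono) auto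
  finally have fin: "P * (sqrt (2*pi) / (M * s) * (1 - 2*e)) \<le> pi * g * (1 + e)" .
  have pos: "sqrt (2*pi) / (M * s) * (1 - 2*e) > 0" using e1 M1 s0 by simp
  have "P \<le> pi * g * (1 + e) / (sqrt (2*pi) / (M * s) * (1 - 2*e))"
    by (simp only: pos_le_divide_eq[OF pos] fin)
  also have "\<dots> = g * M * s * (pi / sqrt (2*pi)) * ((1 + e) / (1 - 2*e))"
    using e1 M1 s0 by (simp add: field_simps)
  also have "pi / sqrt (2*pi) = sqrt (pi/2)"
  proof -
    have a: "sqrt (2*pi) = sqrt 2 * sqrt pi" by (simp add: real_sqrt_mult)
    have b: "sqrt (pi/2) = sqrt pi / sqrt 2" by (simp add: real_sqrt_divide)
    have c: "sqrt pi * sqrt pi = pi" by simp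
    have "sqrt pi > 0" by simp
    then show ?thesis unfolding a b using c by (simp add: field_simps)
  qed
  finally show ?thesis .
qed

lemma bound_k:
  fixes A :: "nat set" and n g :: nat and e :: real
  assumes fin: "finite A" and n1: "n \<ge> 1" and an: "\<And>a. a \<in> A \<Longrightarrow> a \<le> n"
    and g: "\<And>s. card {I \<in> Pow A. \<Sum>I = s} \<le> g"
    and e0: "0 < e" and e1: "e \<le> 1/4" and big: "sqrt (real (card A) + 1) \<ge> 80 / e^3"
  shows "2 ^ card A \<le> real g * real n * sqrt (real (card A) + 1) * sqrt (pi/2) * ((1 + e) / (1 - 2*e))"
proof -
  define k where "k = card A"
  define M where "M = real n"
  define s where "s = sqrt (real k + 1)"
  define L where "L = nat \<lceil>e/3 * M * s\<rceil>"
  have M1: "M \<ge> 1" unfolding M_def using n1 by simp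
  have s0: "s > 0" unfolding s_def by simp
  have pos: "e/3 * M * s > 0" using e0 M1 s0 by simp
  have L1: "e/3 * M * s \<le> real L" unfolding L_def using pos by linarith
  have L2: "real L \<le> e/3 * M * s + 1" unfolding L_def using pos by linarith
  have aM: "real a \<le> M" if "a \<in> A" for a using an[OF that] unfolding M_def by simp
  have main: "2 ^ k * (real L ^ 2 * W k M - 2 * real L ^ 4 * W k M / (M^2 * (real k + 2)) - 64 * M / pi)
           \<le> pi * real g * real L * (real L + 1)"
    using main_ineq[OF fin M1 aM g, of L] unfolding k_def by blast
  have Wl: "W k M \<ge> sqrt (2*pi) / (M * s)"
  proof -
    have "W k M \<ge> sqrt (2*pi/(real k + 1)) / M" using W_lower M1 by simp
    moreover have "sqrt (2*pi/(real k + 1)) / M = sqrt (2*pi) / (M * s)"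
      unfolding s_def by (simp add: real_sqrt_divide)
    ultimately show ?thesis by simp
  qed
  have "(2::real) ^ k \<le> real g * M * s * sqrt (pi/2) * ((1 + e) / (1 - 2*e))"
    by (rule arith_core[OF M1 e0 e1 s_def _ L1 L2 Wl _ _ main]) (use big s_def k_def in auto)
  then show ?thesis unfolding k_def M_def s_def by simp
qed

lemma log_form:
  fixes A :: "nat set" and n g :: nat and e :: real
  assumes fin: "finite A" and n1: "n \<ge> 1" and an: "\<And>a. a \<in> A \<Longrightarrow> a \<le> n"
    and g: "\<And>s. card {I \<in> Pow A. \<Sum>I = s} \<le> g" and g1: "g \<ge> 1"
    and e0: "0 < e" and e1: "e \<le> 1/4" and big: "sqrt (real (card A) + 1) \<ge> 80 / e^3"
  shows "real (card A) \<le> log 2 (real n) + log 2 (real g) + 1/2 * log 2 (real (card A) + 1) + log 2 (sqrt (pi/2)) + log 2 ((1 + e) / (1 - 2*e))"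
proof -
  define k where "k = card A"
  have b: "2 ^ k \<le> real g * real n * sqrt (real k + 1) * sqrt (pi/2) * ((1 + e) / (1 - 2*e))"
    using bound_k[OF fin n1 an g e0 e1 big] unfolding k_def .
  have p1: "real g > 0" "real n > 0" "sqrt (real k + 1) > 0" "sqrt (pi/2) > 0" "(1 + e) / (1 - 2*e) > 0"
    using g1 n1 e0 e1 by auto
  have "real k = log 2 (2 ^ k)" by (simp add: log_nat_power)
  also have "\<dots> \<le> log 2 (real g * real n * sqrt (real k + 1) * sqrt (pi/2) * ((1 + e) / (1 - 2*e)))"
  proof -
    have pX: "0 < real g * real n * sqrt (real k + 1) * sqrt (pi/2) * ((1 + e) / (1 - 2*e))"
      using p1 by (intro mult_pos_pos) auto
    show ?thesis using b pX by (subst log_le_cancel_iff) auto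
  qed
  also have "\<dots> = log 2 (real g) + log 2 (real n) + log 2 (sqrt (real k + 1)) + log 2 (sqrt (pi/2)) + log 2 ((1 + e) / (1 - 2*e))"
    using p1 e0 e1 by (simp only: log_mult) simp
  also have "log 2 (sqrt (real k + 1)) = 1/2 * log 2 (real k + 1)"
    by (simp add: sqrt_def log_root)
  finally show ?thesis unfolding k_def by simp
qed

lemma log_frac_bound:
  assumes "0 < e" "e \<le> 1/4"
  shows "log 2 ((1 + e) / (1 - 2*e)) \<le> 9 * e"
proof -
  have p: "(1 + e) / (1 - 2*e) > 0" using assms by simp
  have "(1 + e) / (1 - 2*e) \<le> 1 + 6*e"
  proof -
    have "1 + e \<le> (1 + 6*e) * (1 - 2*e)" using assms by (simp add: algebra_simps)
    then show ?thesis using assms by (simp add: divide_le_eq)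
  qed
  then have "ln ((1 + e) / (1 - 2*e)) \<le> ln (1 + 6*e)" using p by simp
  also have "\<dots> \<le> 6 * e" using assms by (intro ln_add_one_self_le_self) simp
  finally have l: "ln ((1 + e) / (1 - 2*e)) \<le> 6 * e" .
  have l2: "ln (2::real) \<ge> 2/3" by (rule ln2_ge_two_thirds)
  have "log 2 ((1 + e) / (1 - 2*e)) = ln ((1 + e) / (1 - 2*e)) / ln 2" by (simp add: log_def)
  also have "\<dots> \<le> 6 * e / ln 2" using l l2 by (intro divide_right_mono) auto
  also have "\<dots> \<le> 6 * e / (2/3)" using l2 assms by (intro divide_left_mono) auto
  finally show ?thesis by simp
qed

lemma f_mono:
  fixes x y :: real
  assumes "0 \<le> y" "y < x"
  shows "y - 1/2 * log 2 (y + 1) < x - 1/2 * log 2 (x + 1)"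
proof -
  have r: "(x + 1) / (y + 1) > 0" using assms by simp
  have "log 2 (x + 1) - log 2 (y + 1) = ln ((x + 1) / (y + 1)) / ln 2"
    using assms by (simp add: log_def ln_div diff_divide_distrib)
  also have "\<dots> \<le> ((x + 1) / (y + 1) - 1) / ln 2"
    using ln_le_minus_one[OF r] by (intro divide_right_mono) auto
  also have "(x + 1) / (y + 1) - 1 = (x - y) / (y + 1)" using assms by (simp add: field_simps)
  also have "(x - y) / (y + 1) \<le> x - y" using assms by (simp add: divide_le_eq)
  then have "(x - y) / (y + 1) / ln 2 \<le> (x - y) / ln 2" by (intro divide_right_mono) auto
  also have "(x - y) / ln 2 \<le> (x - y) / (2/3)"
    using ln2_ge_two_thirds assms by (intro divide_left_mono) auto
  finally have h: "log 2 (x + 1) - log 2 (y + 1) \<le> 3/2 * (x - y)" by simp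
  have "1/2 * log 2 (x + 1) - 1/2 * log 2 (y + 1) = 1/2 * (log 2 (x + 1) - log 2 (y + 1))" by (simp add: algebra_simps)
  also have "\<dots> \<le> 1/2 * (3/2 * (x - y))" using h by simp
  finally have "1/2 * log 2 (x + 1) - 1/2 * log 2 (y + 1) \<le> 3/4 * (x - y)" by simp
  then have "1/2 * log 2 (x + 1) - 1/2 * log 2 (y + 1) \<le> 3/4 * x - 3/4 * y" by (simp add: right_diff_distrib)
  then show ?thesis using assms by linarith
qed

lemma ln_le_2sqrt: assumes "x > 0" shows "ln x \<le> 2 * sqrt x"
proof -
  have "ln x = 2 * ln (sqrt x)" using assms by (simp add: ln_sqrt)
  also have "ln (sqrt x) \<le> sqrt x - 1" using assms by (intro ln_le_minus_one) simp
  then have "2 * ln (sqrt x) \<le> 2 * sqrt x" by simp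
  finally show ?thesis .
qed

lemma log2_le_3sqrt: assumes "x > 0" shows "log 2 x \<le> 3 * sqrt x"
proof -
  have "log 2 x = ln x / ln 2" by (simp add: log_def)
  also have "\<dots> \<le> 2 * sqrt x / ln 2" using ln_le_2sqrt[OF assms] by (intro divide_right_mono) auto
  also have "\<dots> \<le> 2 * sqrt x / (2/3)" using ln2_ge_two_thirds assms by (intro divide_left_mono) auto
  finally show ?thesis by simp
qed

lemma small_log:
  fixes x q C :: real
  assumes q: "q > 1" and x1: "x \<ge> 1" and xa: "x \<ge> 9 / (q - 1)^2" and xb: "x \<ge> 2 * \<bar>C\<bar> / (q - 1)"
  shows "1/2 * log 2 x + C \<le> (q - 1) * x"
proof -
  have q0: "q - 1 > 0" using q by simp
  have x0: "x > 0" using x1 by simp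
  have "sqrt x \<ge> sqrt (9 / (q - 1)^2)" using xa by simp
  moreover have "sqrt (9 / (q - 1)^2) = 3 / (q - 1)" using q0 by (simp add: real_sqrt_divide)
  ultimately have sx: "sqrt x \<ge> 3 / (q - 1)" by simp
  have sxp: "sqrt x > 0" using x0 by simp
  have "1/2 * log 2 x \<le> 3/2 * sqrt x" using log2_le_3sqrt[OF x0] by simp
  also have "3/2 * sqrt x \<le> (q - 1) * x / 2"
  proof -
    have "3 \<le> (q - 1) * sqrt x" using sx q0 by (simp add: divide_le_eq mult.commute)
    then have "3 * sqrt x \<le> (q - 1) * sqrt x * sqrt x" using sxp by (intro mult_right_mono) auto
    also have "\<dots> = (q - 1) * x" using x0 by (simp add: mult.assoc)
    finally show ?thesis by simp
  qed
  finally have a: "1/2 * log 2 x \<le> (q - 1) * x / 2" .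
  have "C \<le> \<bar>C\<bar>" by simp
  also have "\<bar>C\<bar> \<le> (q - 1) * x / 2" using xb q0 by (simp add: divide_le_eq mult.commute)
  finally show ?thesis using a by simp
qed

lemma ev_log_ge:
  fixes X :: real
  shows "\<exists>N::nat. N \<ge> 1 \<and> (\<forall>n\<ge>N. log 2 (real n) \<ge> X)"
proof -
  define N where "N = nat \<lceil>2 powr X\<rceil> + 1"
  have "\<forall>n\<ge>N. log 2 (real n) \<ge> X"
  proof (intro allI impI)
    fix n assume "n \<ge> N"
    then have "real n \<ge> 2 powr X" unfolding N_def by linarith
    moreover have "2 powr X > 0" by simp
    ultimately have "real n > 0" by linarith
    with \<open>real n \<ge> 2 powr X\<close> \<open>2 powr X > 0\<close> have "log 2 (real n) \<ge> log 2 (2 powr X)" by (subst log_le_cancel_iff) auto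
    then show "log 2 (real n) \<ge> X" by simp
  qed
  then show ?thesis unfolding N_def by auto
qed

lemma log_sqrt_swap: "- log 2 (sqrt (2 / pi)) = log 2 (sqrt (pi / 2))"
proof -
  have "sqrt (2/pi) * sqrt (pi/2) = 1" by (simp flip: real_sqrt_mult)
  then have "log 2 (sqrt (2/pi)) + log 2 (sqrt (pi/2)) = 0"
    by (metis log_mult log_one mult_eq_0_iff one_neq_zero)
  then show ?thesis by linarith
qed

theorem corollary2:
  fixes g :: nat and S :: "nat set"
  assumes "g \<ge> 1" and "D_set g S"
  shows "\<forall>\<epsilon>>0. \<forall>\<^sub>F n in sequentially.
           real (card (S \<inter> {1..n})) \<le>
             log 2 (real n) + 1/2 * log 2 (log 2 (real n)) + log 2 (real g)
             - log 2 (sqrt (2 / pi)) + \<epsilon>"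
proof (intro allI impI)
  fix \<epsilon> :: real assume \<epsilon>: "\<epsilon> > 0"
  define e where "e = min (1/4) (\<epsilon>/18)"
  have e0: "e > 0" and e1: "e \<le> 1/4" and e9: "9 * e \<le> \<epsilon>/2" using \<epsilon> unfolding e_def by auto
  define C0 where "C0 = log 2 (real g) + log 2 (sqrt (pi/2)) + \<epsilon>/2"
  define K1 where "K1 = (80 / e^3)^2"
  define q where "q = 2 powr \<epsilon>"
  have q1: "q > 1" unfolding q_def using \<epsilon> by simp
  define X where "X = max (max 1 (K1 - C0)) (max (9 / (q - 1)^2) (max (2 * \<bar>C0 + \<epsilon>/2 + 1\<bar> / (q - 1)) (\<bar>C0\<bar> + \<epsilon>)))"
  obtain N :: nat where N1: "N \<ge> 1" and NX: "\<And>n. n \<ge> N \<Longrightarrow> log 2 (real n) \<ge> X"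
    using ev_log_ge[of X] by blast
  show "\<forall>\<^sub>F n in sequentially. real (card (S \<inter> {1..n})) \<le>
             log 2 (real n) + 1/2 * log 2 (log 2 (real n)) + log 2 (real g)
             - log 2 (sqrt (2 / pi)) + \<epsilon>"
    unfolding eventually_sequentially
  proof (intro exI allI impI)
    fix n assume nN: "N \<le> n"
    define A where "A = S \<inter> {1..n}"
    define k where "k = card A"
    define x where "x = log 2 (real n)"
    have xX: "x \<ge> X" unfolding x_def using NX[OF nN] .
    have x1: "x \<ge> 1" using xX unfolding X_def by linarith
    have n1: "n \<ge> 1" using nN N1 by simp
    have finA: "finite A" unfolding A_def by simp
    have an: "\<And>a. a \<in> A \<Longrightarrow> a \<le> n" unfolding A_def by simp
    have gc: "card {I \<in> Pow A. \<Sum>I = s} \<le> g" for s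
    proof -
      have "{I \<in> Pow A. \<Sum>I = s} \<subseteq> {I. I \<subseteq> S \<inter> {..n} \<and> \<Sum>I = s}" unfolding A_def by auto
      moreover have "finite {I. I \<subseteq> S \<inter> {..n} \<and> \<Sum>I = s}"
        by (rule finite_subset[of _ "Pow (S \<inter> {..n})"]) auto
      ultimately have "card {I \<in> Pow A. \<Sum>I = s} \<le> card {I. I \<subseteq> S \<inter> {..n} \<and> \<Sum>I = s}"
        by (rule card_mono[rotated])
      also have "\<dots> \<le> g" using assms(2) unfolding D_set_def by blast
      finally show ?thesis .
    qed
    define T where "T = x + 1/2 * log 2 x + C0 + \<epsilon>/2"
    have goalT: "log 2 (real n) + 1/2 * log 2 (log 2 (real n)) + log 2 (real g) - log 2 (sqrt (2 / pi)) + \<epsilon> = T"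
      unfolding T_def C0_def x_def using log_sqrt_swap by simp
    have lx0: "log 2 x \<ge> 0" using x1 by simp
    have "real k \<le> T"
    proof (cases "sqrt (real k + 1) \<ge> 80 / e^3")
      case False
      then have "sqrt (real k + 1) < 80 / e^3" by simp
      then have "(sqrt (real k + 1))^2 < (80 / e^3)^2" by (intro power_strict_mono) auto
      then have "real k + 1 < K1" unfolding K1_def by simp
      moreover have "K1 \<le> x + C0" using xX unfolding X_def by linarith
      ultimately show ?thesis unfolding T_def using lx0 \<epsilon> by linarith
    next
      case True
      have lf: "real k \<le> x + log 2 (real g) + 1/2 * log 2 (real k + 1) + log 2 (sqrt (pi/2)) + log 2 ((1 + e) / (1 - 2*e))"
        using log_form[OF finA n1 an gc assms(1) e0 e1 True[unfolded k_def]] unfolding k_def x_def .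
      have "log 2 ((1 + e) / (1 - 2*e)) \<le> \<epsilon>/2" using log_frac_bound[OF e0 e1] e9 by linarith
      with lf have fk: "real k - 1/2 * log 2 (real k + 1) \<le> x + C0" unfolding C0_def by linarith
      have y0: "T \<ge> 0" unfolding T_def using xX lx0 \<epsilon> unfolding X_def by linarith
      have yq: "T + 1 \<le> q * x"
      proof -
        have "1/2 * log 2 x + (C0 + \<epsilon>/2 + 1) \<le> (q - 1) * x"
          by (rule small_log[OF q1 x1]) (use xX in \<open>unfold X_def, linarith+\<close>)
        then show ?thesis unfolding T_def by (simp add: algebra_simps)
      qed
      show ?thesis
      proof (rule ccontr)
        assume "\<not> real k \<le> T"
        then have "T < real k" by simp
        from f_mono[OF y0 this] have "T - 1/2 * log 2 (T + 1) < real k - 1/2 * log 2 (real k + 1)" .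
        moreover have "log 2 (T + 1) \<le> \<epsilon> + log 2 x"
        proof -
          have "log 2 (T + 1) \<le> log 2 (q * x)" using yq y0 x1 q1 by (subst log_le_cancel_iff) auto
          also have "\<dots> = log 2 q + log 2 x" using q1 x1 by (simp add: log_mult)
          also have "log 2 q = \<epsilon>" unfolding q_def by simp
          finally show ?thesis .
        qed
        ultimately show False using fk unfolding T_def by linarith
      qed
    qed
    then show "real (card (S \<inter> {1..n})) \<le> log 2 (real n) + 1/2 * log 2 (log 2 (real n)) + log 2 (real g) - log 2 (sqrt (2 / pi)) + \<epsilon>"
      using goalT unfolding k_def A_def by simp
  qed
qed

end
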